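(* Let $M$ be a dihedral axial decomposition algebra of Majorana type $(\eta,\eta)$ over a field $\mathbb{F}$ with $\operatorname{char}\mathbb{F}\neq2$, where $\eta\in\mathbb{F}\setminus\{0,1,\tfrac12\}$, with generating axes $(a_i)_{i\in\mathbb{Z}}$. Let $\mu\in\mathbb{F}$ be such that $a_0p_{2,1}=\frac{(2\eta-1)(4\lambda_1-3\eta)}{2\eta}(2p_{1,0}+\eta(a_1+a_{-1}))+\mu a_0$. If $\lambda_1=\frac{3\eta}{4}$, then $p_{2,1}=p_{2,0}$ or $\mu=0$.
   Context: $M$ is a commutative nonassociative $\mathbb{F}$-algebra. With $\Phi(0)=0,\Phi(1)=1,\Phi(2)=\Phi(3)=\eta$, an axis $a\in M$ is an element together with a decomposition $M=\bigoplus_{i=0}^3M^i(a)$ such that $xa=\Phi(i)x$ for $x\in M^i(a)$, $M^1(a)=\mathbb{F}a$, and $M^0(a)M^i(a)\subset M^i(a)$ for all $i$, $M^2(a)M^2(a)\subset M^0(a)\oplus M^1(a)$, $M^2(a)M^3(a)\subset M^3(a)$, $M^3(a)M^3(a)\subset M^0(a)\oplus M^1(a)\oplus M^2(a)$. The Miyamoto involution $\tau(a)$ is the automorphism acting as $1$ on $M^0(a)\oplus M^1(a)\oplus M^2(a)$ and $-1$ on $M^3(a)$. $M$ is dihedral with axes $(a_i)_{i\in\mathbb{Z}}$ if: $M$ is generated by the $a_i$; $a_i\mapsto a_{i+1}$ extends to an automorphism of $M$; and $\tau(a_j)(a_i)=a_{2j-i}$ for all $i,j$. For $i,j\in\mathbb{Z}$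 put $p_{i,j}=a_ja_{i+j}-\eta(a_j+a_{i+j})$. It is known that $a_0p_{i,0}\in\mathbb{F}a_0$; the scalar $\lambda_i\in\mathbb{F}$ is defined by $a_0p_{i,0}=((1-\eta)\lambda_i-\eta)a_0$. (Such a $\mu$ exists by a proposition of the paper.) *)

theory Defs
  imports Complex_Main
begin

definition comm_algebra :: "('f::field \<Rightarrow> 'm::ab_group_add \<Rightarrow> 'm) \<Rightarrow> ('m \<Rightarrow> 'm \<Rightarrow> 'm) \<Rightarrow> bool" where
  "comm_algebra sc mul \<longleftrightarrow> Vector_Spaces.vector_space sc
     \<and> (\<forall>x y. mul x y = mul y x)
     \<and> (\<forall>x y z. mul (x + y) z = mul x z + mul y z)
     \<and> (\<forall>c x y. mul (sc c x) y = sc c (mul x y))"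

definition setsum :: "'m::ab_group_add set \<Rightarrow> 'm set \<Rightarrow> 'm set" where
  "setsum A B = {x + y |x y. x \<in> A \<and> y \<in> B}"

definition Phi :: "'f::field \<Rightarrow> nat \<Rightarrow> 'f" where
  "Phi eta i = (if i = 0 then 0 else if i = 1 then 1 else eta)"

text \<open>a is an axis with decomposition M = V 0 + V 1 + V 2 + V 3 (direct sum),
  for the fusion law of Majorana type (eta, eta).\<close>
definition is_axis :: "('f::field \<Rightarrow> 'm::ab_group_add \<Rightarrow> 'm) \<Rightarrow> ('m \<Rightarrow> 'm \<Rightarrow> 'm) \<Rightarrow> 'f
    \<Rightarrow> 'm \<Rightarrow> (nat \<Rightarrow> 'm set) \<Rightarrow> bool" where
  "is_axis sc mul eta a V \<longleftrightarrow>
     (\<forall>i<4. module.subspace sc (V i))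
     \<and> (\<forall>x. \<exists>!(x0, x1, x2, x3). x0 \<in> V 0 \<and> x1 \<in> V 1 \<and> x2 \<in> V 2 \<and> x3 \<in> V 3
              \<and> x = x0 + x1 + x2 + x3)
     \<and> (\<forall>i<4. \<forall>x\<in>V i. mul x a = sc (Phi eta i) x)
     \<and> V 1 = range (\<lambda>c. sc c a)
     \<and> (\<forall>i<4. \<forall>x\<in>V 0. \<forall>y\<in>V i. mul x y \<in> V i)
     \<and> (\<forall>x\<in>V 2. \<forall>y\<in>V 2. mul x y \<in> setsum (V 0) (V 1))
     \<and> (\<forall>x\<in>V 2. \<forall>y\<in>V 3. mul x y \<in> V 3)
     \<and> (\<forall>x\<in>V 3. \<forall>y\<in>V 3. mul x y \<in> setsum (setsum (V 0) (V 1)) (V 2))"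

definition miyamoto :: "(nat \<Rightarrow> 'm::ab_group_add set) \<Rightarrow> 'm \<Rightarrow> 'm" where
  "miyamoto V x = (THE y. \<exists>x0 x1 x2 x3. x0 \<in> V 0 \<and> x1 \<in> V 1 \<and> x2 \<in> V 2 \<and> x3 \<in> V 3
      \<and> x = x0 + x1 + x2 + x3 \<and> y = x0 + x1 + x2 - x3)"

inductive_set gen_subalg :: "('f::field \<Rightarrow> 'm::ab_group_add \<Rightarrow> 'm) \<Rightarrow> ('m \<Rightarrow> 'm \<Rightarrow> 'm) \<Rightarrow> 'm set \<Rightarrow> 'm set"
  for sc mul S where
  base: "x \<in> S \<Longrightarrow> x \<in> gen_subalg sc mul S"
| zero: "0 \<in> gen_subalg sc mul S"
| add: "x \<in> gen_subalg sc mul S \<Longrightarrow> y \<in> gen_subalg sc mul S \<Longrightarrow> x + y \<in> gen_subalg sc mul S"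
| smult: "x \<in> gen_subalg sc mul S \<Longrightarrow> sc c x \<in> gen_subalg sc mul S"
| mult: "x \<in> gen_subalg sc mul S \<Longrightarrow> y \<in> gen_subalg sc mul S \<Longrightarrow> mul x y \<in> gen_subalg sc mul S"

definition is_automorphism :: "('f::field \<Rightarrow> 'm::ab_group_add \<Rightarrow> 'm) \<Rightarrow> ('m \<Rightarrow> 'm \<Rightarrow> 'm) \<Rightarrow> ('m \<Rightarrow> 'm) \<Rightarrow> bool" where
  "is_automorphism sc mul f \<longleftrightarrow> bij f \<and> Vector_Spaces.linear sc sc f
      \<and> (\<forall>x y. f (mul x y) = mul (f x) (f y))"

definition dihedral_algebra :: "('f::field \<Rightarrow> 'm::ab_group_add \<Rightarrow> 'm) \<Rightarrow> ('m \<Rightarrow> 'm \<Rightarrow> 'm) \<Rightarrow> 'f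
    \<Rightarrow> (int \<Rightarrow> 'm) \<Rightarrow> (int \<Rightarrow> nat \<Rightarrow> 'm set) \<Rightarrow> bool" where
  "dihedral_algebra sc mul eta a D \<longleftrightarrow>
     comm_algebra sc mul
     \<and> (\<forall>i. is_axis sc mul eta (a i) (D i))
     \<and> gen_subalg sc mul (range a) = UNIV
     \<and> (\<exists>f. is_automorphism sc mul f \<and> (\<forall>i. f (a i) = a (i + 1)))
     \<and> (\<forall>i j. miyamoto (D j) (a i) = a (2 * j - i))"

definition pp :: "('f::field \<Rightarrow> 'm::ab_group_add \<Rightarrow> 'm) \<Rightarrow> ('m \<Rightarrow> 'm \<Rightarrow> 'm) \<Rightarrow> 'f
    \<Rightarrow> (int \<Rightarrow> 'm) \<Rightarrow> int \<Rightarrow> int \<Rightarrow> 'm" where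
  "pp sc mul eta a i j = mul (a j) (a (i + j)) - sc eta (a j + a (i + j))"

end

theory Submission
  imports Defs
begin

lemma ax_uniq:
  assumes "is_axis sc mul eta a V"
  shows "\<exists>!(x0, x1, x2, x3). x0 \<in> V 0 \<and> x1 \<in> V 1 \<and> x2 \<in> V 2 \<and> x3 \<in> V 3
              \<and> x = x0 + x1 + x2 + x3"
proof -
  have "\<forall>x. \<exists>!(x0, x1, x2, x3). x0 \<in> V 0 \<and> x1 \<in> V 1 \<and> x2 \<in> V 2 \<and> x3 \<in> V 3
              \<and> x = x0 + x1 + x2 + x3"
    using assms unfolding is_axis_def by (elim conjE) assumption
  thus ?thesis by (rule spec)
qed

lemma ax_dec:
  assumes "is_axis sc mul eta a V"
  obtains x0 x1 x2 x3 where "x0 \<in> V 0" "x1 \<in> V 1" "x2 \<in> V 2" "x3 \<in> V 3"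
    "x = x0 + x1 + x2 + x3"
proof -
  from ex1_implies_ex[OF ax_uniq[OF assms, of x]] obtain p where
    p: "case p of (x0, x1, x2, x3) \<Rightarrow> x0 \<in> V 0 \<and> x1 \<in> V 1 \<and> x2 \<in> V 2 \<and> x3 \<in> V 3
              \<and> x = x0 + x1 + x2 + x3" by blast
  obtain y0 y1 y2 y3 where "p = (y0, y1, y2, y3)" by (cases p) auto
  with p that show ?thesis by blast
qed

lemma ax_eig:
  assumes "is_axis sc mul eta a V" "i < 4" "x \<in> V i"
  shows "mul x a = sc (Phi eta i) x"
proof -
  have "\<forall>i<4. \<forall>x\<in>V i. mul x a = sc (Phi eta i) x"
    using assms(1) unfolding is_axis_def by (elim conjE) assumption
  thus ?thesis using assms(2,3) by blast
qed

lemma ax_sub: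
  assumes "is_axis sc mul eta a V" "i < 4"
  shows "module.subspace sc (V i)"
proof -
  have "\<forall>i<4. module.subspace sc (V i)"
    using assms(1) unfolding is_axis_def by (elim conjE) assumption
  thus ?thesis using assms(2) by blast
qed

context
  fixes sc :: "'f::field \<Rightarrow> 'm::ab_group_add \<Rightarrow> 'm"
    and mul :: "'m \<Rightarrow> 'm \<Rightarrow> 'm"
  assumes CA: "comm_algebra sc mul"
begin

lemma VS: "vector_space sc"
  using CA unfolding comm_algebra_def by blast

lemma mcomm: "mul x y = mul y x"
  using CA unfolding comm_algebra_def by blast

lemma maddl: "mul (x + y) z = mul x z + mul y z"
  using CA unfolding comm_algebra_def by blast

lemma maddr: "mul z (x + y) = mul z x + mul z y"
  by (simp only: mcomm[of z] maddl)

lemma mscl: "mul (sc c x) y = sc c (mul x y)"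
  using CA unfolding comm_algebra_def by blast

lemma mscr: "mul y (sc c x) = sc c (mul y x)"
  by (simp only: mcomm[of y] mscl)

lemma mdiffl: "mul (x - y) z = mul x z - mul y z"
proof -
  interpret additive "\<lambda>x. mul x z" by standard (rule maddl)
  show ?thesis by (rule diff)
qed

lemma mdiffr: "mul z (x - y) = mul z x - mul z y"
  by (simp only: mcomm[of z] mdiffl)

lemma mzerol: "mul 0 z = 0"
proof -
  interpret additive "\<lambda>x. mul x z" by standard (rule maddl)
  show ?thesis by (rule zero)
qed

lemma mzeror: "mul z 0 = 0"
  by (simp only: mcomm[of z] mzerol)

lemma seress:
  assumes AX: "is_axis sc mul eta a V" and eta: "eta \<noteq> 0" and ax: "mul a x = 0"
  shows "mul a (mul x b) = mul x (mul a b)"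
proof -
  interpret vector_space sc by (rule VS)
  have sub: "\<And>i. i < 4 \<Longrightarrow> subspace (V i)" using ax_sub[OF AX] by blast
  note dec = ax_uniq[OF AX]
  have eig: "\<And>i x. i < 4 \<Longrightarrow> x \<in> V i \<Longrightarrow> mul x a = sc (Phi eta i) x"
    using ax_eig[OF AX] by blast
  have V1: "V 1 = range (\<lambda>c. sc c a)" using AX unfolding is_axis_def by (elim conjE) assumption
  have fus0: "\<forall>i<4. \<forall>x\<in>V 0. \<forall>y\<in>V i. mul x y \<in> V i"
    using AX unfolding is_axis_def by (elim conjE) assumption
  have fus: "\<And>i x y. i < 4 \<Longrightarrow> x \<in> V 0 \<Longrightarrow> y \<in> V i \<Longrightarrow> mul x y \<in> V i"
    using fus0 by blast
  have P0: "Phi eta 0 = 0" and P1: "Phi eta 1 = 1" and P2: "Phi eta 2 = eta" and P3: "Phi eta 3 = eta"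
    by (simp_all add: Phi_def)
  obtain x0 x1 x2 x3 where xs: "x0 \<in> V 0" "x1 \<in> V 1" "x2 \<in> V 2" "x3 \<in> V 3"
    and xe: "x = x0 + x1 + x2 + x3" using dec[of x] by auto
  have "mul a x = mul x0 a + mul x1 a + mul x2 a + mul x3 a"
    by (simp only: xe maddr mcomm[of a])
  also have "\<dots> = 0 + x1 + sc eta x2 + sc eta x3"
    using eig[of 0 x0] eig[of 1 x1] eig[of 2 x2] eig[of 3 x3] xs P0 P1 P2 P3 by simp
  finally have z: "0 + x1 + sc eta x2 + sc eta x3 = 0 + 0 + 0 + 0" using ax by simp
  have m1: "sc eta x2 \<in> V 2" "sc eta x3 \<in> V 3" using xs sub subspace_scale by auto
  have z0: "0 \<in> V i" if "i < 4" for i using sub[OF that] subspace_0 by blast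
  from ex1E[OF dec[of 0]] obtain p where uq: "\<forall>q. (case q of (x0, x1, x2, x3) \<Rightarrow> x0 \<in> V 0 \<and> x1 \<in> V 1 \<and> x2 \<in> V 2 \<and> x3 \<in> V 3
              \<and> (0::'m) = x0 + x1 + x2 + x3) \<longrightarrow> q = p" by blast
  have "(0, x1, sc eta x2, sc eta x3) = p" using uq[rule_format, of "(0, x1, sc eta x2, sc eta x3)"]
    z m1 xs z0[of 0] by simp
  moreover have "((0::'m), (0::'m), (0::'m), (0::'m)) = p" using uq[rule_format, of "(0, 0, 0, 0)"]
    z0[of 0] z0[of 1] z0[of 2] z0[of 3] by simp
  ultimately have "(0, x1, sc eta x2, sc eta x3) = ((0::'m), (0::'m), (0::'m), (0::'m))" by simp
  hence "x1 = 0" "x2 = 0" "x3 = 0" using eta by auto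
  hence x0e: "x = x0" using xe by simp
  obtain b0 b1 b2 b3 where bs: "b0 \<in> V 0" "b1 \<in> V 1" "b2 \<in> V 2" "b3 \<in> V 3"
    and be: "b = b0 + b1 + b2 + b3" using dec[of b] by auto
  obtain c where b1: "b1 = sc c a" using bs(2) V1 by auto
  have xa: "mul x a = 0" using ax mcomm[of x a] by simp
  have xb1: "mul x b1 = 0" using b1 xa by (simp add: mscr)
  have f0: "mul x b0 \<in> V 0" and f2: "mul x b2 \<in> V 2" and f3: "mul x b3 \<in> V 3"
    using fus[of 0 x0 b0] fus[of 2 x0 b2] fus[of 3 x0 b3] bs xs x0e by auto
  have "mul a (mul x b) = mul (mul x b0) a + mul (mul x b2) a + mul (mul x b3) a"
    by (simp only: be maddr xb1 mzeror mcomm[of a] add_0_right)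
  also have "\<dots> = sc eta (mul x b2) + sc eta (mul x b3)"
    using eig[OF _ f0] eig[OF _ f2] eig[OF _ f3] P0 P2 P3 by simp
  finally have L: "mul a (mul x b) = sc eta (mul x b2) + sc eta (mul x b3)" .
  have "mul a b = mul b0 a + mul b1 a + mul b2 a + mul b3 a"
    by (simp only: be maddr mcomm[of a])
  also have "\<dots> = b1 + sc eta b2 + sc eta b3"
    using eig[of 0 b0] eig[of 1 b1] eig[of 2 b2] eig[of 3 b3] bs P0 P1 P2 P3 by simp
  finally have "mul x (mul a b) = mul x b1 + sc eta (mul x b2) + sc eta (mul x b3)"
    by (simp add: maddr mscr)
  with L xb1 show ?thesis by simp
qed

lemma core:
  assumes AX: "is_axis sc mul eta a V" and eta: "eta \<noteq> 0"
    and Qa: "mul a Q = sc k a" and Qb: "mul b Q = sc k b"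
  shows "mul Q (mul a b - sc eta (a + b)) = sc k (mul a b - sc eta (a + b))"
proof -
  interpret vector_space sc by (rule VS)
  have V1: "V 1 = range (\<lambda>c. sc c a)" using AX unfolding is_axis_def by (elim conjE) assumption
  have "a \<in> V 1" using V1 by (metis rangeI scale_one)
  hence "mul a a = sc (Phi eta 1) a" using ax_eig[OF AX, of 1 a] by simp
  hence aa: "mul a a = a" by (simp add: Phi_def)
  define x where "x = Q - sc k a"
  have ax: "mul a x = 0" by (simp add: x_def mdiffr mscr Qa aa)
  have S: "mul a (mul x b) = mul x (mul a b)" by (rule seress[OF AX eta ax])
  have xb: "mul x b = sc k b - sc k (mul a b)"
    by (simp add: x_def mdiffl mscl Qb[unfolded mcomm[of b Q]] mcomm[of b a])
  have "mul a (mul x b) = sc k (mul a b) - sc k (mul a (mul a b))"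
    by (simp add: xb mdiffr mscr)
  moreover have "mul x (mul a b) = mul Q (mul a b) - sc k (mul a (mul a b))"
    by (simp add: x_def mdiffl mscl)
  ultimately have Qab: "mul Q (mul a b) = sc k (mul a b)" using S by simp
  have "mul Q (mul a b - sc eta (a + b)) = mul Q (mul a b) - sc eta (mul Q a + mul Q b)"
    by (simp add: mdiffr mscr maddr)
  also have "\<dots> = sc k (mul a b) - sc eta (sc k a + sc k b)"
    by (simp only: Qab mcomm[of Q a] mcomm[of Q b] Qa Qb)
  also have "\<dots> = sc k (mul a b - sc eta (a + b))"
    by (simp add: scale_right_diff_distrib scale_right_distrib mult.commute)
  finally show ?thesis .
qed


lemma miy:
  assumes AX: "is_axis sc mul eta a V"
    and xs: "x0 \<in> V 0" "x1 \<in> V 1" "x2 \<in> V 2" "x3 \<in> V 3" and xe: "x = x0 + x1 + x2 + x3"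
  shows "miyamoto V x = x0 + x1 + x2 - x3"
proof -
  note dec = ax_uniq[OF AX, of x]
  show ?thesis unfolding miyamoto_def
  proof (rule the_equality)
    show "\<exists>x0a x1a x2a x3a. x0a \<in> V 0 \<and> x1a \<in> V 1 \<and> x2a \<in> V 2 \<and> x3a \<in> V 3 \<and>
      x = x0a + x1a + x2a + x3a \<and> x0 + x1 + x2 - x3 = x0a + x1a + x2a - x3a"
      using xs xe by blast
  next
    fix y assume "\<exists>y0 y1 y2 y3. y0 \<in> V 0 \<and> y1 \<in> V 1 \<and> y2 \<in> V 2 \<and> y3 \<in> V 3 \<and>
      x = y0 + y1 + y2 + y3 \<and> y = y0 + y1 + y2 - y3"
    then obtain y0 y1 y2 y3 where ys: "y0 \<in> V 0" "y1 \<in> V 1" "y2 \<in> V 2" "y3 \<in> V 3"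
      "x = y0 + y1 + y2 + y3" "y = y0 + y1 + y2 - y3" by blast
    from dec obtain p where "case p of (x0, x1, x2, x3) \<Rightarrow> x0 \<in> V 0 \<and> x1 \<in> V 1 \<and> x2 \<in> V 2 \<and> x3 \<in> V 3
              \<and> x = x0 + x1 + x2 + x3" and uq: "\<forall>q. (case q of (x0, x1, x2, x3) \<Rightarrow> x0 \<in> V 0 \<and> x1 \<in> V 1 \<and> x2 \<in> V 2 \<and> x3 \<in> V 3
              \<and> x = x0 + x1 + x2 + x3) \<longrightarrow> q = p" by (rule ex1E) blast
    have "(y0, y1, y2, y3) = p" using uq[rule_format, of "(y0, y1, y2, y3)"] ys by simp
    moreover have "(x0, x1, x2, x3) = p" using uq[rule_format, of "(x0, x1, x2, x3)"] xs xe by simp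
    ultimately have "(y0, y1, y2, y3) = (x0, x1, x2, x3)" by simp
    thus "y = x0 + x1 + x2 - x3" using ys by simp
  qed
qed

end

theorem corollary1:
  fixes sc :: "'f::field \<Rightarrow> 'm::ab_group_add \<Rightarrow> 'm"
    and mul :: "'m \<Rightarrow> 'm \<Rightarrow> 'm"
    and eta lam1 mu :: 'f
    and a :: "int \<Rightarrow> 'm"
    and D :: "int \<Rightarrow> nat \<Rightarrow> 'm set"
  assumes char: "(2::'f) \<noteq> 0"
    and eta: "eta \<noteq> 0" "eta \<noteq> 1" "eta \<noteq> 1 / 2"
    and dih: "dihedral_algebra sc mul eta a D"
    and lam1_def: "mul (a 0) (pp sc mul eta a 1 0) = sc ((1 - eta) * lam1 - eta) (a 0)"
    and mu: "mul (a 0) (pp sc mul eta a 2 1)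
       = sc ((2 * eta - 1) * (4 * lam1 - 3 * eta) / (2 * eta))
            (sc 2 (pp sc mul eta a 1 0) + sc eta (a 1 + a (-1))) + sc mu (a 0)"
    and lam1: "lam1 = 3 * eta / 4"
  shows "pp sc mul eta a 2 1 = pp sc mul eta a 2 0 \<or> mu = 0"
proof -
  have CA: "comm_algebra sc mul" using dih unfolding dihedral_algebra_def by blast
  interpret vector_space sc by (rule VS[OF CA])
  have AX: "\<And>i. is_axis sc mul eta (a i) (D i)" using dih unfolding dihedral_algebra_def by blast
  have MI: "\<And>i j. miyamoto (D j) (a i) = a (2 * j - i)" using dih unfolding dihedral_algebra_def by blast
  obtain f where fa: "is_automorphism sc mul f" and fs: "\<And>i. f (a i) = a (i + 1)"
    using dih unfolding dihedral_algebra_def by blast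
  interpret L: Vector_Spaces.linear sc sc f using fa unfolding is_automorphism_def by blast
  have fm: "\<And>x y. f (mul x y) = mul (f x) (f y)" using fa unfolding is_automorphism_def by blast
  let ?P = "pp sc mul eta a"
  have fpp: "f (?P i j) = ?P i k" if "k = j + 1" for i j k
    using that by (simp add: pp_def L.diff L.scale L.add fm fs algebra_simps)
  have four: "(4::'f) \<noteq> 0"
  proof
    assume "(4::'f) = 0"
    moreover have "(2::'f) * 2 = 4" by simp
    ultimately have "(2::'f) * 2 = 0" by (simp only:)
    thus False using char by (subst (asm) mult_eq_0_iff) blast
  qed
  have C0: "(2 * eta - 1) * (4 * lam1 - 3 * eta) / (2 * eta) = 0"
    using four by (simp add: lam1)
  have M0: "mul (a 0) (?P 2 1) = sc mu (a 0)" using mu C0 by simp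
  obtain x0 x1 x2 x3 where xs: "x0 \<in> D 0 0" "x1 \<in> D 0 1" "x2 \<in> D 0 2" "x3 \<in> D 0 3"
    and xe: "a 2 = x0 + x1 + x2 + x3"
    by (rule ax_dec[OF AX[of 0]])
  have "miyamoto (D 0) (a 2) = x0 + x1 + x2 - x3" by (rule miy[OF CA AX xs xe])
  hence am2: "a (-2) = x0 + x1 + x2 - x3" using MI[of 0 2] by simp
  have t3: "x3 + x3 \<in> D 0 3" using ax_sub[OF AX[of 0], of 3] xs(4) subspace_add by simp
  have "mul (x3 + x3) (a 0) = sc eta (x3 + x3)"
    using ax_eig[OF AX[of 0] _ t3] by (simp add: Phi_def)
  hence t3m: "mul (a 0) (x3 + x3) = sc eta (x3 + x3)" using mcomm[OF CA, of "x3 + x3" "a 0"] by simp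
  have a2: "a 2 = a (-2) + (x3 + x3)" using xe am2 by (simp add: algebra_simps)
  have Pm2: "?P 2 (-2) = ?P 2 0"
    unfolding pp_def using t3m
    by (simp add: a2 maddr[OF CA] mcomm[OF CA, of "a (-2)" "a 0"] scale_right_distrib algebra_simps)
  have Pm1: "?P 2 (-1) = ?P 2 1" using fpp[of "-1" "-2" 2] fpp[of 1 0 2] Pm2 by simp
  have P2: "?P 2 2 = ?P 2 0" using fpp[of 0 "-1" 2] fpp[of 2 1 2] Pm1 by simp
  have P3: "?P 2 3 = ?P 2 1" using fpp[of 3 2 2] fpp[of 1 0 2] P2 by simp
  have P4: "?P 2 4 = ?P 2 0" using fpp[of 4 3 2] fpp[of 2 1 2] P3 P2 by simp
  have M1: "mul (a 1) (?P 2 2) = sc mu (a 1)"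
    using arg_cong[OF M0, of f] fm fs fpp[of 2 1 2] L.scale by simp
  have M2: "mul (a 2) (?P 2 3) = sc mu (a 2)"
    using arg_cong[OF M1, of f] fm fs fpp[of 3 2 2] L.scale by simp
  have M3: "mul (a 3) (?P 2 4) = sc mu (a 3)"
    using arg_cong[OF M2, of f] fm fs fpp[of 4 3 2] L.scale by simp
  have E1: "mul (?P 2 1) (?P 2 0) = sc mu (?P 2 0)"
    using core[OF CA AX[of 0] eta(1), of "?P 2 1" mu "a 2"] M0 M2 P3
    by (simp add: pp_def)
  have E2: "mul (?P 2 0) (?P 2 1) = sc mu (?P 2 1)"
    using core[OF CA AX[of 1] eta(1), of "?P 2 0" mu "a 3"] M1 M3 P2 P4
    by (simp add: pp_def)
  have "sc mu (?P 2 0) = mul (?P 2 1) (?P 2 0)" by (rule E1[symmetric])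
  also have "\<dots> = mul (?P 2 0) (?P 2 1)" by (rule mcomm[OF CA])
  also have "\<dots> = sc mu (?P 2 1)" by (rule E2)
  finally have "sc mu (?P 2 0) = sc mu (?P 2 1)" .
  thus ?thesis by (metis scale_cancel_left)
qed

end
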